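(* Let $\nu\ne0$ be a positive measure on $[0,1]$ with moments $a_n=\int_0^1t^n\,d\nu(t)$, $n\ge0$. Then for every $\alpha>0$ the sequence $\big((a_0+a_1+\cdots+a_n)^{-\alpha}\big)_{n\ge0}$ is a Hausdorff moment sequence. In particular $\big(1/(a_0+\cdots+a_n)\big)_n$ is an infinitely divisible Hausdorff moment sequence.
   Context: A Hausdorff moment sequence is a sequence of the form $\big(\int_0^1t^n\,d\tau(t)\big)_{n\ge0}$ for a positive measure $\tau$ on $[0,1]$. A Hausdorff moment sequence $(b_n)$ is infinitely divisible if $(b_n^\alpha)_n$ is a Hausdorff moment sequence for every $\alpha>0$. *)

theory Defs
  imports "HOL-Analysis.Analysis"
begin

definition measure_on_unit_interval :: "real measure \<Rightarrow> bool" where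
  "measure_on_unit_interval M \<longleftrightarrow>
     sets M = sets (restrict_space borel {0..1::real}) \<and> finite_measure M"

definition moment :: "real measure \<Rightarrow> nat \<Rightarrow> real" where
  "moment M n = (\<integral>t. t ^ n \<partial>M)"

definition hausdorff_moment_seq :: "(nat \<Rightarrow> real) \<Rightarrow> bool" where
  "hausdorff_moment_seq b \<longleftrightarrow>
     (\<exists>M. measure_on_unit_interval M \<and> (\<forall>n. b n = moment M n))"

definition infinitely_divisible_hms :: "(nat \<Rightarrow> real) \<Rightarrow> bool" where
  "infinitely_divisible_hms b \<longleftrightarrow>
     hausdorff_moment_seq b \<and> (\<forall>\<alpha>>0. hausdorff_moment_seq (\<lambda>n. b n powr \<alpha>))"

end

theory Submission
  imports Defs "HOL-Probability.Probability"
begin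


abbreviation UI :: "real measure" where "UI \<equiv> restrict_space borel {0..1::real}"

lemma space_UI[simp]: "space UI = {0..1}" by (simp add: space_restrict_space)

lemma mou_space: "measure_on_unit_interval M \<Longrightarrow> space M = {0..1}"
  unfolding measure_on_unit_interval_def by (metis sets_eq_imp_space_eq space_UI)

lemma mou_meas:
  assumes "measure_on_unit_interval M" "f \<in> borel_measurable borel"
  shows "f \<in> borel_measurable M"
proof -
  have "f \<in> borel_measurable UI" by (rule measurable_restrict_space1[OF assms(2)])
  then show ?thesis using assms(1) unfolding measure_on_unit_interval_def
    using measurable_cong_sets by blast
qed

lemma mou_integrable:
  fixes f :: "real \<Rightarrow> real"
  assumes "measure_on_unit_interval M" "f \<in> borel_measurable borel"
    and "\<And>t. t \<in> {0..1} \<Longrightarrow> \<bar>f t\<bar> \<le> K"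
  shows "integrable M f"
proof -
  interpret finite_measure M using assms(1) unfolding measure_on_unit_interval_def by auto
  show ?thesis
    by (rule integrable_const_bound[where B=K]) (use assms mou_space mou_meas in auto)
qed

lemma mou_pow_integrable: "measure_on_unit_interval M \<Longrightarrow> integrable M (\<lambda>t. t ^ n)"
  by (rule mou_integrable[where K=1]) (auto simp: abs_le_iff power_le_one)

lemma mou_pow_meas: "measure_on_unit_interval M \<Longrightarrow> (\<lambda>t. t ^ n) \<in> borel_measurable M"
  by (rule mou_meas) auto

lemma HMS_one: "hausdorff_moment_seq (\<lambda>n. 1)"
  unfolding hausdorff_moment_seq_def
proof (intro exI conjI allI)
  show "measure_on_unit_interval (return UI 1)"
    unfolding measure_on_unit_interval_def
    using prob_space_return[of 1 UI] by (auto simp: prob_space_def)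
  fix n show "1 = moment (return UI 1) n"
    unfolding moment_def by (subst integral_return) (auto intro: measurable_restrict_space1)
qed

lemma HMS_scale:
  assumes "hausdorff_moment_seq b" "c \<ge> 0"
  shows "hausdorff_moment_seq (\<lambda>n. c * b n)"
proof -
  obtain M where M: "measure_on_unit_interval M" "\<And>n. b n = moment M n"
    using assms unfolding hausdorff_moment_seq_def by auto
  interpret finite_measure M using M unfolding measure_on_unit_interval_def by auto
  let ?N = "density M (\<lambda>_. ennreal c)"
  have "emeasure ?N (space ?N) = ennreal c * emeasure M (space M)"
    by (simp add: emeasure_density nn_integral_cmult)
  also have "\<dots> \<noteq> \<infinity>" by (simp add: ennreal_mult_eq_top_iff)
  finally have "finite_measure ?N" by (rule finite_measureI)
  then have "measure_on_unit_interval ?N"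
    using M(1) unfolding measure_on_unit_interval_def by simp
  moreover have "c * b n = moment ?N n" for n
    unfolding moment_def M(2)
    by (subst integral_density) (use assms M(1) mou_pow_meas[OF M(1)] in auto)
  ultimately show ?thesis unfolding hausdorff_moment_seq_def by blast
qed

lemma moment_bounds:
  assumes M: "measure_on_unit_interval M"
  shows "0 \<le> moment M n \<and> moment M n \<le> moment M 0"
proof -
  interpret finite_measure M using M unfolding measure_on_unit_interval_def by auto
  have "0 \<le> moment M n" unfolding moment_def
    by (intro integral_nonneg_AE AE_I2) (simp add: mou_space[OF M])
  moreover have "moment M n \<le> moment M 0" unfolding moment_def
    by (rule integral_mono) (auto simp: mou_space[OF M] mou_pow_integrable[OF M] power_le_one)
  ultimately show ?thesis by simp
qed

lemma moment0: "measure_on_unit_interval M \<Longrightarrow> moment M 0 = measure M {0..1}"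
  unfolding moment_def by (simp add: mou_space)

definition msum :: "real measure \<Rightarrow> real measure \<Rightarrow> real measure" where
  "msum M N = measure_of {0..1} (sets UI) (\<lambda>A. emeasure M A + emeasure N A)"

lemma sa_UI: "sigma_algebra {0..1::real} (sets UI)"
  using sets.sigma_algebra_axioms[of UI] by simp

lemma sets_msum: "sets (msum M N) = sets UI"
  unfolding msum_def
  by (metis sa_UI sets.space_closed sets_measure_of sigma_algebra.sigma_sets_eq space_UI)

lemma emeasure_msum:
  assumes M: "measure_on_unit_interval M" and N: "measure_on_unit_interval N"
    and A: "A \<in> sets UI"
  shows "emeasure (msum M N) A = emeasure M A + emeasure N A"
  unfolding msum_def
proof (rule emeasure_measure_of_sigma[OF sa_UI _ _ A])
  show "positive (sets UI) (\<lambda>A. emeasure M A + emeasure N A)"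
    by (simp add: positive_def)
  have sM: "sets M = sets UI" and sN: "sets N = sets UI"
    using M N unfolding measure_on_unit_interval_def by auto
  show "countably_additive (sets UI) (\<lambda>A. emeasure M A + emeasure N A)"
    unfolding countably_additive_def
  proof (intro allI impI)
    fix F :: "nat \<Rightarrow> real set"
    assume F: "range F \<subseteq> sets UI" "disjoint_family F" "\<Union> (range F) \<in> sets UI"
    have "(\<Sum>i. emeasure M (F i) + emeasure N (F i)) = (\<Sum>i. emeasure M (F i)) + (\<Sum>i. emeasure N (F i))"
      by (rule suminf_add[symmetric]) auto
    also have "\<dots> = emeasure M (\<Union> (range F)) + emeasure N (\<Union> (range F))"
      using F sM sN by (simp add: suminf_emeasure)
    finally show "(\<Sum>i. emeasure M (F i) + emeasure N (F i)) = emeasure M (\<Union> (range F)) + emeasure N (\<Union> (range F))" .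
  qed
qed

lemma nn_integral_msum:
  assumes M: "measure_on_unit_interval M" and N: "measure_on_unit_interval N"
    and f: "f \<in> borel_measurable (msum M N)"
  shows "(\<integral>\<^sup>+x. f x \<partial>msum M N) = (\<integral>\<^sup>+x. f x \<partial>M) + (\<integral>\<^sup>+x. f x \<partial>N)"
proof -
  have sM: "sets M = sets (msum M N)" and sN: "sets N = sets (msum M N)"
    using M N unfolding measure_on_unit_interval_def by (auto simp: sets_msum)
  have spM: "space M = space (msum M N)" and spN: "space N = space (msum M N)"
    using sets_eq_imp_space_eq[OF sM] sets_eq_imp_space_eq[OF sN] by auto
  have mM: "g \<in> borel_measurable M" if "g \<in> borel_measurable (msum M N)" for g :: "real \<Rightarrow> ennreal"
    using that measurable_cong_sets[OF sM refl] by blast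
  have mN: "g \<in> borel_measurable N" if "g \<in> borel_measurable (msum M N)" for g :: "real \<Rightarrow> ennreal"
    using that measurable_cong_sets[OF sN refl] by blast
  show ?thesis
  using f
  proof induction
    case (cong f g)
    then show ?case
      by (metis nn_integral_cong spM spN)
  next
    case (set A)
    then have "A \<in> sets UI" by (simp add: sets_msum)
    then show ?case using set sM sN by (simp add: emeasure_msum[OF M N])
  next
    case (mult f c)
    then show ?case
      by (simp add: nn_integral_cmult mM mN distrib_left)
  next
    case (add f g)
    then show ?case
      by (simp add: nn_integral_add mM mN algebra_simps)
  next
    case (seq U)
    have incM: "incseq (\<lambda>i. integral\<^sup>N M (U i))"
      using seq(3) by (auto simp: incseq_def intro!: nn_integral_mono dest: le_funD)
    have incN: "incseq (\<lambda>i. integral\<^sup>N N (U i))"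
      using seq(3) by (auto simp: incseq_def intro!: nn_integral_mono dest: le_funD)
    have SU: "Sup (range U) = (\<lambda>x. SUP i. U i x)" by (auto simp: fun_eq_iff image_comp)
    have "integral\<^sup>N (msum M N) (Sup (range U)) = (SUP i. integral\<^sup>N (msum M N) (U i))"
      unfolding SU using seq by (intro nn_integral_monotone_convergence_SUP) auto
    also have "\<dots> = (SUP i. integral\<^sup>N M (U i) + integral\<^sup>N N (U i))"
      using seq by simp
    also have "\<dots> = (SUP i. integral\<^sup>N M (U i)) + (SUP i. integral\<^sup>N N (U i))"
      by (rule ennreal_SUP_add[OF incM incN])
    also have "\<dots> = integral\<^sup>N M (Sup (range U)) + integral\<^sup>N N (Sup (range U))"
      unfolding SU using seq by (simp add: nn_integral_monotone_convergence_SUP mM mN)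
    finally show ?case .
  qed
qed

lemma HMS_add:
  assumes "hausdorff_moment_seq b" "hausdorff_moment_seq c"
  shows "hausdorff_moment_seq (\<lambda>n. b n + c n)"
proof -
  obtain M where M: "measure_on_unit_interval M" "\<And>n. b n = moment M n"
    using assms unfolding hausdorff_moment_seq_def by auto
  obtain N where N: "measure_on_unit_interval N" "\<And>n. c n = moment N n"
    using assms unfolding hausdorff_moment_seq_def by auto
  interpret M: finite_measure M using M unfolding measure_on_unit_interval_def by auto
  interpret N: finite_measure N using N unfolding measure_on_unit_interval_def by auto
  let ?S = "msum M N"
  have "space ?S = {0..1}" by (metis sets_msum sets_eq_imp_space_eq space_UI)
  moreover have "{0..1} \<in> sets UI" using sets.top[of UI] by simp
  ultimately have "emeasure ?S (space ?S) = emeasure M {0..1} + emeasure N {0..1}"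
    by (simp add: emeasure_msum[OF M(1) N(1)])
  also have "\<dots> \<noteq> \<infinity>" using mou_space[OF M(1)] mou_space[OF N(1)] by auto
  finally have "finite_measure ?S" by (rule finite_measureI)
  then have S: "measure_on_unit_interval ?S"
    unfolding measure_on_unit_interval_def by (simp add: sets_msum)
  have "b n + c n = moment ?S n" for n
  proof -
    have m: "(\<lambda>t. ennreal (t ^ n)) \<in> borel_measurable ?S"
      using mou_pow_meas[OF S] by measurable
    have e: "ennreal (integral\<^sup>L L (\<lambda>t. t ^ n)) = (\<integral>\<^sup>+t. ennreal (t ^ n) \<partial>L)"
      if L: "measure_on_unit_interval L" for L
      by (rule nn_integral_eq_integral[symmetric]) (auto simp: mou_pow_integrable[OF L] mou_space[OF L])
    have "ennreal (moment ?S n) = ennreal (moment M n) + ennreal (moment N n)"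
      unfolding moment_def e[OF S] e[OF M(1)] e[OF N(1)] by (rule nn_integral_msum[OF M(1) N(1) m])
    also have "\<dots> = ennreal (moment M n + moment N n)"
      using moment_bounds[OF M(1), of n] moment_bounds[OF N(1), of n] by (simp add: ennreal_plus)
    finally have "ennreal (moment ?S n) = ennreal (moment M n + moment N n)" .
    then have "moment ?S n = moment M n + moment N n"
      using moment_bounds[OF M(1), of n] moment_bounds[OF N(1), of n] moment_bounds[OF S, of n]
      by (subst (asm) ennreal_inj) auto
    then show ?thesis using M(2) N(2) by simp
  qed
  then show ?thesis using S unfolding hausdorff_moment_seq_def by blast
qed



lemma HMS_mult:
  assumes "hausdorff_moment_seq b" "hausdorff_moment_seq c"
  shows "hausdorff_moment_seq (\<lambda>n. b n * c n)"
proof -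
  obtain M where M: "measure_on_unit_interval M" "\<And>n. b n = moment M n"
    using assms unfolding hausdorff_moment_seq_def by auto
  obtain N where N: "measure_on_unit_interval N" "\<And>n. c n = moment N n"
    using assms unfolding hausdorff_moment_seq_def by auto
  interpret M: finite_measure M using M unfolding measure_on_unit_interval_def by auto
  interpret N: finite_measure N using N unfolding measure_on_unit_interval_def by auto
  interpret MN: pair_sigma_finite M N by unfold_locales
  interpret P: finite_measure "M \<Otimes>\<^sub>M N"
    by (rule finite_measure_pair_measure) unfold_locales
  have sp: "space (M \<Otimes>\<^sub>M N) = {0..1} \<times> {0..1}"
    by (simp add: space_pair_measure mou_space[OF M(1)] mou_space[OF N(1)])
  have m1: "(\<lambda>x::real. x) \<in> borel_measurable M" by (rule mou_meas[OF M(1)]) simp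
  have m2: "(\<lambda>x::real. x) \<in> borel_measurable N" by (rule mou_meas[OF N(1)]) simp
  have mb: "(\<lambda>x. fst x * snd x) \<in> borel_measurable (M \<Otimes>\<^sub>M N)"
    using measurable_compose[OF measurable_fst m1] measurable_compose[OF measurable_snd m2]
    by (intro borel_measurable_times) auto
  have mf: "(\<lambda>x. fst x * snd x) \<in> measurable (M \<Otimes>\<^sub>M N) UI"
    by (rule measurable_restrict_space2[OF _ mb]) (auto simp: sp mult_le_one)
  let ?Q = "distr (M \<Otimes>\<^sub>M N) UI (\<lambda>x. fst x * snd x)"
  have Q: "measure_on_unit_interval ?Q"
    unfolding measure_on_unit_interval_def using P.finite_measure_distr[OF mf] by simp
  have "b n * c n = moment ?Q n" for n
  proof -
    have "moment ?Q n = (\<integral>x. (fst x * snd x) ^ n \<partial>(M \<Otimes>\<^sub>M N))"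
      unfolding moment_def by (rule integral_distr[OF mf]) (auto intro: measurable_restrict_space1)
    also have "\<dots> = (\<integral>x. (\<lambda>(s, t). s ^ n * t ^ n) x \<partial>(M \<Otimes>\<^sub>M N))"
      by (intro Bochner_Integration.integral_cong) (auto simp: power_mult_distrib split: prod.splits)
    also have "\<dots> = (\<integral>s. (\<integral>t. s ^ n * t ^ n \<partial>N) \<partial>M)"
    proof (rule MN.integral_fst[symmetric])
      show "integrable (M \<Otimes>\<^sub>M N) (\<lambda>(s, t). s ^ n * t ^ n)"
      proof (rule P.integrable_const_bound[where B=1])
        have "(\<lambda>x. (fst x * snd x) ^ n) \<in> borel_measurable (M \<Otimes>\<^sub>M N)"
          using mb by (rule borel_measurable_power)
        then show "(\<lambda>(s, t). s ^ n * t ^ n) \<in> borel_measurable (M \<Otimes>\<^sub>M N)"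
          by (simp add: case_prod_beta power_mult_distrib)
      qed (auto simp: sp abs_mult power_le_one mult_le_one)
    qed
    also have "\<dots> = (\<integral>s. s ^ n * moment N n \<partial>M)"
      unfolding moment_def by simp
    also have "\<dots> = moment M n * moment N n"
      unfolding moment_def by simp
    finally show ?thesis using M(2) N(2) by simp
  qed
  then show ?thesis using Q unfolding hausdorff_moment_seq_def by blast
qed

lemma HMS_pow:
  assumes "hausdorff_moment_seq b"
  shows "hausdorff_moment_seq (\<lambda>n. b n ^ k)"
proof (induction k)
  case 0 then show ?case using HMS_one by simp
next
  case (Suc k)
  then show ?case using HMS_mult[OF assms Suc] by (simp add: mult.commute)
qed

lemma HMS_zero: "hausdorff_moment_seq (\<lambda>n. 0)"
  using HMS_scale[OF HMS_one, of 0] by simp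

lemma HMS_sum:
  assumes "\<And>k. k \<in> A \<Longrightarrow> hausdorff_moment_seq (f k)" "finite A"
  shows "hausdorff_moment_seq (\<lambda>n. \<Sum>k\<in>A. f k n)"
  using assms(2,1)
proof (induction A rule: finite_induct)
  case empty then show ?case using HMS_zero by simp
next
  case (insert x F)
  then show ?case using HMS_add[of "f x" "\<lambda>n. \<Sum>k\<in>F. f k n"] by simp
qed



lemma HMS_limit:
  assumes H: "\<And>j. hausdorff_moment_seq (c j)" and L: "\<And>n. (\<lambda>j. c j n) \<longlonglongrightarrow> b n"
  shows "hausdorff_moment_seq b"
proof -
  obtain M where M: "\<And>j. measure_on_unit_interval (M j)" "\<And>j n. c j n = moment (M j) n"
    using H unfolding hausdorff_moment_seq_def by metis
  have cb: "0 \<le> c j n \<and> c j n \<le> c j 0" for j n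
    using moment_bounds[OF M(1)] M(2) by metis
  have b0: "0 \<le> b n" for n
    by (rule LIMSEQ_le_const[OF L]) (use cb in auto)
  have b1: "b n \<le> b 0" for n
    by (rule LIMSEQ_le[OF L L]) (use cb in auto)
  show ?thesis
  proof (cases "b 0 = 0")
    case True
    then have "b = (\<lambda>n. 0)" using b0 b1 by (auto intro: antisym)
    then show ?thesis using HMS_zero by simp
  next
    case False
    then have bpos: "b 0 > 0" using b0[of 0] by simp
    define \<mu> where "\<mu> j = (if c j 0 > 0 then distr (density (M j) (\<lambda>_. ennreal (1 / c j 0))) borel (\<lambda>x. x)
                           else return borel 0)" for j
    have mu1: "real_distribution (\<mu> j) \<and> measure (\<mu> j) {-1<..1} = 1" for j
    proof (cases "c j 0 > 0")
      case True
      interpret Mj: finite_measure "M j" using M(1) unfolding measure_on_unit_interval_def by auto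
      let ?D = "density (M j) (\<lambda>_. ennreal (1 / c j 0))"
      have sp: "space (M j) = {0..1}" using mou_space[OF M(1)] .
      have "emeasure ?D (space ?D) = ennreal (1 / c j 0) * emeasure (M j) (space (M j))"
        by (simp add: emeasure_density nn_integral_cmult)
      also have "emeasure (M j) (space (M j)) = ennreal (c j 0)"
        using M(2)[of j 0] moment0[OF M(1)] sp by (simp add: Mj.emeasure_eq_measure)
      also have "ennreal (1 / c j 0) * ennreal (c j 0) = 1"
        using True by (simp add: ennreal_mult[symmetric])
      finally have pD: "prob_space ?D" by (rule prob_spaceI)
      have mid: "(\<lambda>x::real. x) \<in> borel_measurable ?D"
        using mou_meas[OF M(1), of "\<lambda>x. x"] by simp
      have rd: "real_distribution (distr ?D borel (\<lambda>x. x))"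
        using prob_space.real_distribution_distr[OF pD mid] .
      have "emeasure (distr ?D borel (\<lambda>x. x)) {-1<..1} = emeasure ?D ((\<lambda>x. x) -` {-1<..1} \<inter> space ?D)"
        by (rule emeasure_distr[OF mid]) simp
      also have "(\<lambda>x. x) -` {-1<..1} \<inter> space ?D = space ?D" using sp by auto
      also have "emeasure ?D (space ?D) = 1" using prob_space.emeasure_space_1[OF pD] by simp
      finally have "measure (distr ?D borel (\<lambda>x. x)) {-1<..1} = 1" by (simp add: measure_def)
      then show ?thesis using rd True unfolding \<mu>_def by simp
    next
      case False
      have "real_distribution (return borel (0::real))"
        unfolding real_distribution_def real_distribution_axioms_def
        by (auto intro: prob_space_return)
      moreover have "measure (return borel (0::real)) {-1<..1} = 1"
        by (simp add: measure_return)
      ultimately show ?thesis using False unfolding \<mu>_def by simp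
    qed
    have "tight \<mu>"
      unfolding tight_def
    proof (intro conjI allI impI)
      fix j show "real_distribution (\<mu> j)" using mu1 by simp
    next
      fix e :: real assume "e > 0"
      then show "\<exists>a b::real. a < b \<and> (\<forall>n. 1 - e < measure (\<mu> n) {a<..b})"
        using mu1 by (intro exI[of _ "-1"] exI[of _ 1]) auto
    qed
    from tight_imp_convergent_subsubsequence[OF this strict_mono_id]
    obtain r P where r: "strict_mono r" and P: "real_distribution P"
      and wc: "weak_conv_m (\<mu> \<circ> id \<circ> r) P" by blast
    interpret P: real_distribution P by (rule P)
    define cl where "cl t = max 0 (min 1 t)" for t :: real
    have cl01: "cl t \<in> {0..1}" for t unfolding cl_def by auto
    have clc: "isCont cl t" for t unfolding cl_def by (intro continuous_intros)
    have clm: "cl \<in> borel_measurable borel" unfolding cl_def by measurable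
    have lim1: "(\<lambda>j. integral\<^sup>L ((\<mu> \<circ> id \<circ> r) j) (\<lambda>t. cl t ^ n)) \<longlonglongrightarrow> integral\<^sup>L P (\<lambda>t. cl t ^ n)" for n
    proof (rule weak_conv_imp_integral_bdd_continuous_conv[where B=1])
      show "\<And>j. real_distribution ((\<mu> \<circ> id \<circ> r) j)" using mu1 by simp
      show "real_distribution P" by fact
      show "weak_conv_m (\<mu> \<circ> id \<circ> r) P" by fact
      show "\<And>x. isCont (\<lambda>t. cl t ^ n) x" using clc by (intro continuous_intros)
      show "\<And>x. norm (cl x ^ n) \<le> 1" using cl01 by (auto simp: abs_le_iff power_le_one)
    qed
    have cr0: "(\<lambda>j. c (r j) 0) \<longlonglongrightarrow> b 0"
      using LIMSEQ_subseq_LIMSEQ[OF L r] by (simp add: o_def)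
    have ev: "eventually (\<lambda>j. c (r j) 0 > 0) sequentially"
      using order_tendstoD(1)[OF cr0 bpos] .
    have eq: "integral\<^sup>L P (\<lambda>t. cl t ^ n) = b n / b 0" for n
    proof -
      have crn: "(\<lambda>j. c (r j) n) \<longlonglongrightarrow> b n"
        using LIMSEQ_subseq_LIMSEQ[OF L r] by (simp add: o_def)
      have "(\<lambda>j. c (r j) n / c (r j) 0) \<longlonglongrightarrow> b n / b 0"
        by (rule tendsto_divide[OF crn cr0]) (use bpos in simp)
      moreover have "eventually (\<lambda>j. c (r j) n / c (r j) 0 = integral\<^sup>L ((\<mu> \<circ> id \<circ> r) j) (\<lambda>t. cl t ^ n)) sequentially"
        using ev
      proof eventually_elim
        case (elim j)
        let ?j = "r j"
        let ?D = "density (M ?j) (\<lambda>_. ennreal (1 / c ?j 0))"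
        have mid: "(\<lambda>x::real. x) \<in> measurable ?D borel"
          using mou_meas[OF M(1), of "\<lambda>x. x"] by simp
        have "integral\<^sup>L ((\<mu> \<circ> id \<circ> r) j) (\<lambda>t. cl t ^ n) = integral\<^sup>L ?D (\<lambda>t. cl t ^ n)"
          using elim unfolding \<mu>_def
          by (simp add: integral_distr[OF mid borel_measurable_power[OF clm]])
        also have "\<dots> = integral\<^sup>L (M ?j) (\<lambda>t. (1 / c ?j 0) * cl t ^ n)"
          by (subst integral_density) (use elim mou_meas[OF M(1) borel_measurable_power[OF clm]] in auto)
        also have "\<dots> = integral\<^sup>L (M ?j) (\<lambda>t. (1 / c ?j 0) * t ^ n)"
          by (intro Bochner_Integration.integral_cong refl) (auto simp: mou_space[OF M(1)] cl_def)
        also have "\<dots> = c ?j n / c ?j 0"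
          using M(2)[of ?j n] by (simp add: moment_def)
        finally show ?case by simp
      qed
      ultimately have "(\<lambda>j. integral\<^sup>L ((\<mu> \<circ> id \<circ> r) j) (\<lambda>t. cl t ^ n)) \<longlonglongrightarrow> b n / b 0"
        by (rule Lim_transform_eventually)
      then show ?thesis using lim1[of n] LIMSEQ_unique by blast
    qed
    have clUI: "cl \<in> measurable P UI"
    proof (rule measurable_restrict_space2)
      show "cl \<in> space P \<rightarrow> {0..1}" using cl01 by auto
      show "cl \<in> borel_measurable P" using clm by (simp cong: measurable_cong_sets)
    qed
    let ?Q = "distr P UI cl"
    have Q: "measure_on_unit_interval ?Q"
      unfolding measure_on_unit_interval_def using P.finite_measure_distr[OF clUI] by simp
    have "moment ?Q n = b n / b 0" for n
      unfolding moment_def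
      by (subst integral_distr[OF clUI]) (auto intro: measurable_restrict_space1 simp: eq)
    then have "hausdorff_moment_seq (\<lambda>n. b n / b 0)"
      using Q unfolding hausdorff_moment_seq_def by auto
    from HMS_scale[OF this, of "b 0"] show ?thesis using bpos by simp
  qed
qed



lemma HMS_weighted:
  fixes g h :: "real \<Rightarrow> real"
  assumes nu: "measure_on_unit_interval \<nu>"
    and gm: "g \<in> borel_measurable borel" and hm: "h \<in> borel_measurable borel"
    and g01: "\<And>t. t \<in> {0..1} \<Longrightarrow> g t \<in> {0..1}"
    and h0: "\<And>t. t \<in> {0..1} \<Longrightarrow> 0 \<le> h t \<and> h t \<le> K"
  shows "hausdorff_moment_seq (\<lambda>n. \<integral>t. h t * g t ^ n \<partial>\<nu>)"
proof -
  interpret finite_measure \<nu> using nu unfolding measure_on_unit_interval_def by auto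
  have sp: "space \<nu> = {0..1}" by (rule mou_space[OF nu])
  let ?D = "density \<nu> (\<lambda>t. ennreal (h t))"
  have hint: "integrable \<nu> h"
    by (rule mou_integrable[OF nu hm, where K=K]) (use h0 in force)
  have "emeasure ?D (space ?D) = (\<integral>\<^sup>+t. ennreal (h t) \<partial>\<nu>)"
  proof -
    have hm': "(\<lambda>t. ennreal (h t)) \<in> borel_measurable \<nu>" using mou_meas[OF nu hm] by measurable
    show ?thesis by (subst emeasure_density[OF hm']) auto
  qed
  also have "\<dots> = ennreal (integral\<^sup>L \<nu> h)"
    by (rule nn_integral_eq_integral[OF hint]) (use h0 sp in auto)
  also have "\<dots> \<noteq> \<infinity>" by simp
  finally interpret D: finite_measure ?D by (rule finite_measureI)
  have gUI: "g \<in> measurable ?D UI"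
  proof (rule measurable_restrict_space2)
    show "g \<in> space ?D \<rightarrow> {0..1}" using g01 sp by auto
    show "g \<in> borel_measurable ?D" using mou_meas[OF nu gm] by simp
  qed
  let ?Q = "distr ?D UI g"
  have Q: "measure_on_unit_interval ?Q"
    unfolding measure_on_unit_interval_def using D.finite_measure_distr[OF gUI] by simp
  have "moment ?Q n = (\<integral>t. h t * g t ^ n \<partial>\<nu>)" for n
  proof -
    have "moment ?Q n = (\<integral>t. g t ^ n \<partial>?D)"
      unfolding moment_def by (rule integral_distr[OF gUI]) (auto intro: measurable_restrict_space1)
    also have "\<dots> = (\<integral>t. h t * g t ^ n \<partial>\<nu>)"
      by (subst integral_density) (use mou_meas[OF nu gm] mou_meas[OF nu hm] h0 sp in auto)
    finally show ?thesis .
  qed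
  then show ?thesis using Q unfolding hausdorff_moment_seq_def by metis
qed

lemma trunc_case:
  assumes nu: "measure_on_unit_interval \<nu>" and ne: "emeasure \<nu> {0..1} \<noteq> 0"
    and q: "0 \<le> q" "q < 1" and al: "\<alpha> > 0"
  shows "hausdorff_moment_seq (\<lambda>n. (\<Sum>k\<le>n. \<integral>t. min t q ^ k \<partial>\<nu>) powr (-\<alpha>))"
proof -
  interpret finite_measure \<nu> using nu unfolding measure_on_unit_interval_def by auto
  have sp: "space \<nu> = {0..1}" by (rule mou_space[OF nu])
  define m where "m t = min t q" for t :: real
  define u where "u t = m t / (1 - m t)" for t
  have m01: "t \<in> {0..1} \<Longrightarrow> 0 \<le> m t \<and> m t \<le> q" for t unfolding m_def using q by auto
  have m1: "t \<in> {0..1} \<Longrightarrow> 0 \<le> m t \<and> m t \<le> 1" for t using m01[of t] q by auto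
  have mm: "m \<in> borel_measurable borel" unfolding m_def by measurable
  have um: "u \<in> borel_measurable borel" unfolding u_def m_def by measurable
  have ub: "t \<in> {0..1} \<Longrightarrow> 0 \<le> u t \<and> u t \<le> 1 / (1 - q)" for t
  proof -
    assume t: "t \<in> {0..1}"
    then have "0 \<le> m t" "m t \<le> q" using m01 by auto
    then have "m t \<le> 1" "1 - q \<le> 1 - m t" using q by auto
    moreover have "0 < 1 - q" using q by simp
    ultimately show ?thesis unfolding u_def using \<open>0 \<le> m t\<close>
      by (auto intro!: divide_nonneg_nonneg frac_le)
  qed
  define a0 where "a0 = measure \<nu> {0..1}"
  have a0: "a0 > 0" using ne unfolding a0_def
    by (simp add: emeasure_eq_measure zero_less_measure_iff sp[symmetric])
  define U where "U = (\<integral>t. u t \<partial>\<nu>)"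
  have uint: "integrable \<nu> u"
    by (rule mou_integrable[OF nu um, where K="1 / (1 - q)"]) (use ub in force)
  have U0: "U \<ge> 0" unfolding U_def by (intro integral_nonneg_AE AE_I2) (use ub sp in auto)
  define C where "C = a0 + U"
  have C: "C > 0" unfolding C_def using a0 U0 by simp
  define V where "V n = (\<integral>t. u t * m t ^ n \<partial>\<nu>)" for n
  have mpow: "(\<lambda>t. m t ^ n) \<in> borel_measurable borel" for n using mm by measurable
  have mint: "integrable \<nu> (\<lambda>t. m t ^ n)" for n
    by (rule mou_integrable[OF nu mpow, where K=1])
       (use m1 in \<open>auto simp: abs_le_iff intro!: power_le_one\<close>)
  have vint: "integrable \<nu> (\<lambda>t. u t * m t ^ n)" for n
  proof (rule mou_integrable[OF nu borel_measurable_times[OF um mpow], where K="1 / (1 - q)"])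
    fix t :: real assume t: "t \<in> {0..1}"
    have "0 \<le> m t ^ n" "m t ^ n \<le> 1" using m1[OF t] by (auto intro: power_le_one)
    then have "u t * m t ^ n \<le> u t" using ub[OF t] by (intro mult_right_le_one_le) auto
    then show "\<bar>u t * m t ^ n\<bar> \<le> 1 / (1 - q)" using ub[OF t] \<open>0 \<le> m t ^ n\<close> by simp
  qed
  have ident: "(\<Sum>k\<le>n. m t ^ k) = 1 + u t - u t * m t ^ n" if t: "t \<in> {0..1}" for t n
  proof -
    have "m t \<noteq> 1" using m01[OF t] q by auto
    then have "1 - m t \<noteq> 0" by simp
    then show ?thesis unfolding sum_gp0 u_def using \<open>m t \<noteq> 1\<close>
      by (simp add: field_simps)
  qed
  have S: "(\<Sum>k\<le>n. \<integral>t. min t q ^ k \<partial>\<nu>) = C - V n" for n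
  proof -
    have "(\<Sum>k\<le>n. \<integral>t. min t q ^ k \<partial>\<nu>) = (\<integral>t. (\<Sum>k\<le>n. m t ^ k) \<partial>\<nu>)"
      unfolding m_def[symmetric] using Bochner_Integration.integral_sum[where I="{..n}" and M=\<nu> and f="\<lambda>k t. m t ^ k"] mint by simp
    also have "\<dots> = (\<integral>t. 1 + u t - u t * m t ^ n \<partial>\<nu>)"
      by (intro Bochner_Integration.integral_cong refl) (use ident sp in auto)
    also have "\<dots> = (\<integral>t. 1 \<partial>\<nu>) + U - V n"
      unfolding U_def V_def using uint vint by simp
    also have "(\<integral>t. 1 \<partial>\<nu>) = a0" unfolding a0_def by (simp add: sp)
    finally show ?thesis unfolding C_def by simp
  qed
  define T where "T n = V n / C" for n
  have TH: "hausdorff_moment_seq T"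
  proof -
    have "hausdorff_moment_seq (\<lambda>n. \<integral>t. (u t / C) * m t ^ n \<partial>\<nu>)"
    proof (rule HMS_weighted[OF nu mm _ _, where K="1 / (1 - q) / C"])
      show "(\<lambda>t. u t / C) \<in> borel_measurable borel" using um by measurable
      show "\<And>t. t \<in> {0..1} \<Longrightarrow> m t \<in> {0..1}" using m01 q by force
      show "\<And>t. t \<in> {0..1} \<Longrightarrow> 0 \<le> u t / C \<and> u t / C \<le> 1 / (1 - q) / C"
      proof -
        fix t :: real assume "t \<in> {0..1}"
        then have "0 \<le> u t" "u t \<le> 1 / (1 - q)" using ub by auto
        moreover have "u t / C \<le> (1 / (1 - q)) / C"
          by (rule divide_right_mono) (use C \<open>u t \<le> 1 / (1 - q)\<close> in auto)
        ultimately show "0 \<le> u t / C \<and> u t / C \<le> 1 / (1 - q) / C"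
          using C by simp
      qed
    qed
    moreover have "(\<integral>t. (u t / C) * m t ^ n \<partial>\<nu>) = T n" for n
      unfolding T_def V_def by (simp add: mult.commute)
    ultimately show ?thesis by simp
  qed
  obtain R where R: "measure_on_unit_interval R" "\<And>n. T n = moment R n"
    using TH unfolding hausdorff_moment_seq_def by metis
  have Tb: "0 \<le> T n \<and> T n \<le> T 0" for n using moment_bounds[OF R(1)] R(2) by metis
  have V0: "V 0 = U" unfolding V_def U_def by simp
  have T0: "T 0 < 1" unfolding T_def V0 C_def using a0 U0 by simp
  have Sn: "C - V n = C * (1 - T n)" for n unfolding T_def using C by (simp add: field_simps)
  define g where "g k = ((-\<alpha>) gchoose k) * (-1) ^ k" for k
  have g0: "g k \<ge> 0" for k
  proof -
    have e: "((-1::real)^k) * (-1)^k = 1" by (simp add: power_mult_distrib[symmetric])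
    have "g k = (((-1::real)^k) * (-1)^k) * pochhammer \<alpha> k / fact k"
      unfolding g_def gbinomial_pochhammer minus_minus
      by (simp only: mult_ac times_divide_eq_left times_divide_eq_right)
    also have "\<dots> = pochhammer \<alpha> k / fact k" using e by simp
    also have "\<dots> \<ge> 0" using al by (intro divide_nonneg_pos pochhammer_nonneg) auto
    finally show ?thesis .
  qed
  have lim: "(\<lambda>N. C powr (-\<alpha>) * (\<Sum>k<N. g k * T n ^ k)) \<longlonglongrightarrow> (C - V n) powr (-\<alpha>)" for n
  proof -
    have Tabs: "\<bar>- T n\<bar> < 1" using Tb[of n] T0 by auto
    have "(\<lambda>k. ((-\<alpha>) gchoose k) * (- T n) ^ k) sums (1 + - T n) powr (-\<alpha>)"
      by (rule gen_binomial_real[OF Tabs])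
    moreover have "((-\<alpha>) gchoose k) * (- T n) ^ k = g k * T n ^ k" for k
      unfolding g_def by (subst power_minus) (simp only: mult_ac)
    ultimately have "(\<lambda>k. g k * T n ^ k) sums (1 - T n) powr (-\<alpha>)" by simp
    then have "(\<lambda>N. \<Sum>k<N. g k * T n ^ k) \<longlonglongrightarrow> (1 - T n) powr (-\<alpha>)"
      by (simp add: sums_def)
    then have "(\<lambda>N. C powr (-\<alpha>) * (\<Sum>k<N. g k * T n ^ k)) \<longlonglongrightarrow> C powr (-\<alpha>) * (1 - T n) powr (-\<alpha>)"
      by (rule tendsto_mult_left)
    also have "C powr (-\<alpha>) * (1 - T n) powr (-\<alpha>) = (C - V n) powr (-\<alpha>)"
      unfolding Sn using C Tb[of n] T0 by (simp add: powr_mult)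
    finally show ?thesis .
  qed
  have "hausdorff_moment_seq (\<lambda>n. C powr (-\<alpha>) * (\<Sum>k<N. g k * T n ^ k))" for N
    by (intro HMS_scale HMS_sum HMS_pow TH) (auto intro: g0)
  from HMS_limit[OF this lim] show ?thesis unfolding S .
qed



theorem proposition4p2:
  fixes \<nu> :: "real measure"
  assumes "measure_on_unit_interval \<nu>"
    and "emeasure \<nu> {0..1} \<noteq> 0"
  shows "(\<forall>\<alpha>::real. \<alpha> > 0 \<longrightarrow>
           hausdorff_moment_seq (\<lambda>n. (\<Sum>k\<le>n. moment \<nu> k) powr (-\<alpha>)))
       \<and> infinitely_divisible_hms (\<lambda>n. 1 / (\<Sum>k\<le>n. moment \<nu> k))"
proof -
  note nu = assms(1)
  interpret finite_measure \<nu> using nu unfolding measure_on_unit_interval_def by auto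
  have sp: "space \<nu> = {0..1}" by (rule mou_space[OF nu])
  define s where "s n = (\<Sum>k\<le>n. moment \<nu> k)" for n
  have a0: "moment \<nu> 0 > 0" using assms(2) unfolding moment0[OF nu]
    by (simp add: emeasure_eq_measure zero_less_measure_iff sp[symmetric])
  have spos: "s n > 0" for n
  proof -
    have "moment \<nu> 0 \<le> s n" unfolding s_def
      by (rule member_le_sum[where f="moment \<nu>" and i=0]) (use moment_bounds[OF nu] in auto)
    then show ?thesis using a0 by simp
  qed
  have main: "hausdorff_moment_seq (\<lambda>n. s n powr (-\<alpha>))" if al: "\<alpha> > 0" for \<alpha>
  proof -
    define q where "q j = 1 - inverse (real (Suc j))" for j
    have q01: "0 \<le> q j" "q j < 1" for j unfolding q_def by (auto simp: field_simps)
    have qlim: "q \<longlonglongrightarrow> 1"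
      unfolding q_def using tendsto_diff[OF tendsto_const LIMSEQ_inverse_real_of_nat, of 1] by simp
    have H: "hausdorff_moment_seq (\<lambda>n. (\<Sum>k\<le>n. \<integral>t. min t (q j) ^ k \<partial>\<nu>) powr (-\<alpha>))" for j
      by (rule trunc_case[OF nu assms(2) q01 al])
    have L: "(\<lambda>j. (\<Sum>k\<le>n. \<integral>t. min t (q j) ^ k \<partial>\<nu>) powr (-\<alpha>)) \<longlonglongrightarrow> s n powr (-\<alpha>)" for n
    proof (rule tendsto_powr[OF _ tendsto_const])
      show "s n \<noteq> 0" using spos[of n] by simp
      show "(\<lambda>j. \<Sum>k\<le>n. \<integral>t. min t (q j) ^ k \<partial>\<nu>) \<longlonglongrightarrow> s n"
        unfolding s_def
      proof (rule tendsto_sum)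
        fix k
        show "(\<lambda>j. \<integral>t. min t (q j) ^ k \<partial>\<nu>) \<longlonglongrightarrow> moment \<nu> k"
          unfolding moment_def
        proof (rule integral_dominated_convergence[where w="\<lambda>_. 1"])
          show "(\<lambda>t. t ^ k) \<in> borel_measurable \<nu>" by (rule mou_pow_meas[OF nu])
          show "(\<lambda>t. min t (q j) ^ k) \<in> borel_measurable \<nu>" for j
            by (rule mou_meas[OF nu]) measurable
          show "integrable \<nu> (\<lambda>_. 1::real)" by simp
          show "AE t in \<nu>. (\<lambda>j. min t (q j) ^ k) \<longlonglongrightarrow> t ^ k"
          proof (rule AE_I2)
            fix t assume "t \<in> space \<nu>"
            then have "min t 1 = t" using sp by auto
            moreover have "(\<lambda>j. min t (q j)) \<longlonglongrightarrow> min t 1"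
              by (rule tendsto_min[OF tendsto_const qlim])
            ultimately show "(\<lambda>j. min t (q j) ^ k) \<longlonglongrightarrow> t ^ k"
              by (metis tendsto_power)
          qed
          show "AE t in \<nu>. norm (min t (q j) ^ k) \<le> 1" for j
          proof (rule AE_I2)
            fix t assume "t \<in> space \<nu>"
            then have "0 \<le> min t (q j)" "min t (q j) \<le> 1" using sp q01[of j] by auto
            then show "norm (min t (q j) ^ k) \<le> 1" by (simp add: power_le_one)
          qed
        qed
      qed
    qed
    show ?thesis by (rule HMS_limit[OF H L])
  qed
  have inv: "1 / s n = s n powr (-1)" for n
    using spos[of n] by (simp add: powr_minus_divide)
  have inv2: "(1 / s n) powr \<alpha> = s n powr (-\<alpha>)" for n \<alpha>
    using spos[of n] by (simp add: powr_divide powr_minus_divide)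
  have "infinitely_divisible_hms (\<lambda>n. 1 / s n)"
    unfolding infinitely_divisible_hms_def inv2
    using main[of 1] by (simp add: inv main)
  then show ?thesis using main unfolding s_def by blast
qed

end
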